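(* Let $K$ be a field, $S=K[x_1,\ldots,x_n]$, and let $I\subseteq S$ be a squarefree strongly stable ideal generated in degree $d$. Then for all $j\ge0$, \[ \mu_{d+j}(I)=\sum_{i=0}^{n-d}\binom{n-d-i}{j}m_{d+i}(I). \]
   Context: A squarefree monomial ideal $I$ with minimal monomial generating set $G(I)$ is squarefree strongly stable if for every $u\in G(I)$ and all $i<j$ with $x_j\mid u$ and $x_i\nmid u$, one has $x_iu/x_j\in I$. For a monomial $u$, $m(u)=\max\{j: x_j\mid u\}$. $G_i(I)=\{u\in G(I): m(u)=i\}$ and $m_i(I)=|G_i(I)|$. $I_{[j]}$ is the ideal generated by all squarefree monomials of degree $j$ in $I$, and $\mu_j(I)$ is the number of minimal monomial generators of $I_{[j]}$ (i.e., the number of squarefree monomials of degree $j$ in $I$). Binomial coefficients $\binom{a}{b}$ with $b>a\ge0$ are $0$. *)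

theory Defs
  imports Main
begin

text \<open>A squarefree monomial x_{i1}...x_{ik} in K[x_1,...,x_n] is represented by its
support, a subset of {1..n}; divisibility of squarefree monomials is inclusion.
A squarefree monomial ideal I is represented by its minimal monomial generating
set G = G(I), a finite antichain of such supports.\<close>

definition in_ideal :: "nat set set \<Rightarrow> nat set \<Rightarrow> bool" where
  "in_ideal G u \<longleftrightarrow> (\<exists>g\<in>G. g \<subseteq> u)"

definition minimal_sqf_gens :: "nat \<Rightarrow> nat set set \<Rightarrow> bool" where
  "minimal_sqf_gens n G \<longleftrightarrow> finite G \<and> (\<forall>g\<in>G. g \<subseteq> {1..n}) \<and>
     (\<forall>g\<in>G. \<forall>h\<in>G. g \<subseteq> h \<longrightarrow> g = h)"

definition sqf_strongly_stable :: "nat set set \<Rightarrow> bool" where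
  "sqf_strongly_stable G \<longleftrightarrow>
     (\<forall>u\<in>G. \<forall>i j. 1 \<le> i \<and> i < j \<and> j \<in> u \<and> i \<notin> u \<longrightarrow> in_ideal G (insert i (u - {j})))"

text \<open>m(u) = max index of a variable dividing u (convention m(1) = 0).\<close>
definition mmax :: "nat set \<Rightarrow> nat" where
  "mmax u = Max (insert 0 u)"

definition m_count :: "nat set set \<Rightarrow> nat \<Rightarrow> nat" where
  "m_count G i = card {u \<in> G. mmax u = i}"

definition mu :: "nat \<Rightarrow> nat set set \<Rightarrow> nat \<Rightarrow> nat" where
  "mu n G j = card {A. A \<subseteq> {1..n} \<and> card A = j \<and> in_ideal G A}"

end

theory Submission
  imports Defs
begin

lemma shift_lemma:
  assumes G: "minimal_sqf_gens n G" "\<forall>g\<in>G. card g = d" "sqf_strongly_stable G"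
    and w: "w \<subseteq> {1..n}" and u: "u \<subseteq> w" "card u = d"
    and seg: "\<forall>x\<in>u. \<forall>y\<in>w-u. x<y"
  shows "g \<in> G \<Longrightarrow> g \<subseteq> w \<Longrightarrow> u \<in> G"
proof (induction "card (g - u)" arbitrary: g rule: less_induct)
  case less
  have fw: "finite w" using w finite_subset by blast
  have fu: "finite u" using u fw finite_subset by blast
  have fg: "finite g" using less fw finite_subset by blast
  have cg: "card g = d" using less G by auto
  show ?case
  proof (cases "g \<subseteq> u")
    case True
    then have "g = u" using card_subset_eq[OF fu True] cg u by simp
    then show ?thesis using less by simp
  next
    case False
    then obtain jj where jj: "jj \<in> g" "jj \<notin> u" by blast
    have "\<not> u \<subseteq> g"
    proof
      assume "u \<subseteq> g"
      then have "u = g" using card_subset_eq[OF fg] cg u by simp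
      then show False using False by simp
    qed
    then obtain ii where ii: "ii \<in> u" "ii \<notin> g" by blast
    have jjw: "jj \<in> w" using less jj by blast
    have lt: "ii < jj" using seg ii jj jjw by blast
    have i1: "1 \<le> ii" using ii u w by auto
    define g' where "g' = insert ii (g - {jj})"
    have "in_ideal G g'" using G(3) less(2) i1 lt jj ii unfolding sqf_strongly_stable_def g'_def by blast
    then obtain h where h: "h \<in> G" "h \<subseteq> g'" unfolding in_ideal_def by blast
    have fg': "finite g'" using fg g'_def by simp
    have cg': "card g' = d" unfolding g'_def using fg jj ii cg
      by (simp add: card_insert_if) (metis One_nat_def card_Diff_singleton card_gt_0_iff diff_Suc_1 Suc_pred empty_iff)
    have "h = g'" using card_subset_eq[OF fg' h(2)] h G cg' by auto
    then have g'G: "g' \<in> G" using h by simp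
    have g'w: "g' \<subseteq> w" using less ii u unfolding g'_def by blast
    have "g' - u = (g - u) - {jj}" unfolding g'_def using ii by blast
    then have "card (g' - u) < card (g - u)" using jj fg
      by (metis Diff_iff card_Diff1_less finite_Diff)
    then show ?thesis using less g'G g'w by blast
  qed
qed

lemma init_seg:
  assumes "finite (w::nat set)" "d \<le> card w"
  shows "\<exists>u\<subseteq>w. card u = d \<and> (\<forall>x\<in>u. \<forall>y\<in>w-u. x<y)"
proof -
  define xs where "xs = sorted_list_of_set w"
  have d: "distinct xs" and s: "sorted xs" and sw: "set xs = w" and l: "length xs = card w"
    using assms unfolding xs_def by auto
  define u where "u = set (take d xs)"
  have wu: "w - u = set (drop d xs)"
    unfolding u_def sw[symmetric] using d
    by (metis Diff_cancel Un_Diff append_take_drop_id set_append set_take_disj_set_drop_if_distinct order_refl Diff_triv sup_bot.left_neutral inf_commute)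
  have "card u = d" unfolding u_def using d l assms by (simp add: distinct_card)
  moreover have "u \<subseteq> w" unfolding u_def sw[symmetric] by (meson set_take_subset)
  moreover have "\<forall>x\<in>u. \<forall>y\<in>w-u. x<y"
  proof (intro ballI)
    fix x y assume x: "x \<in> u" and y: "y \<in> w - u"
    have "sorted (take d xs @ drop d xs)" using s by simp
    then have "x \<le> y" using x y wu unfolding u_def sorted_append by auto
    moreover have "x \<noteq> y" using x y by auto
    ultimately show "x < y" by simp
  qed
  ultimately show ?thesis by blast
qed

lemma seg_unique:
  assumes "finite w" "u \<subseteq> w" "u' \<subseteq> w" "card u = card u'"
    "\<forall>x\<in>u. \<forall>y\<in>w-u. x<y" "\<forall>x\<in>u'. \<forall>y\<in>w-u'. (x::nat)<y"
  shows "u = u'"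
proof (rule ccontr)
  assume ne: "u \<noteq> u'"
  have fu: "finite u" "finite u'" using assms finite_subset by blast+
  have "\<not> u \<subseteq> u'" using card_subset_eq[OF fu(2)] assms ne by metis
  then obtain x where x: "x \<in> u" "x \<notin> u'" by blast
  have "u' \<subseteq> u"
  proof
    fix y assume y: "y \<in> u'"
    show "y \<in> u"
    proof (rule ccontr)
      assume "y \<notin> u"
      then have "x < y" using assms(5) x y assms(3) by blast
      moreover have "y < x" using assms(6) x y assms(2) by blast
      ultimately show False by simp
    qed
  qed
  then show False using card_subset_eq[OF fu(1)] assms ne by metis
qed

lemma mmax_ge: "finite u \<Longrightarrow> x \<in> u \<Longrightarrow> x \<le> mmax u"
  unfolding mmax_def by simp

lemma mmax_le: "u \<subseteq> {1..n} \<Longrightarrow> mmax u \<le> n"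
proof -
  assume a: "u \<subseteq> {1..n}"
  then have f: "finite u" using finite_subset by blast
  show ?thesis unfolding mmax_def using a f by (subst Max_le_iff) auto
qed

lemma mmax_geq_card: "u \<subseteq> {1..n} \<Longrightarrow> card u \<le> mmax u"
proof -
  assume a: "u \<subseteq> {1..n}"
  then have f: "finite u" using finite_subset by blast
  have "u \<subseteq> {1..mmax u}" using a mmax_ge[OF f] by auto
  then show ?thesis using card_mono[of "{1..mmax u}" u] by simp
qed

theorem lemma4p1:
  fixes n d j :: nat and G :: "nat set set"
  assumes "minimal_sqf_gens n G"
    and "\<forall>g\<in>G. card g = d"
    and "sqf_strongly_stable G"
  shows "mu n G (d + j) = (\<Sum>i = 0..n - d. ((n - d - i) choose j) * m_count G (d + i))"
proof -
  have fG: "finite G" and Gs: "\<forall>g\<in>G. g \<subseteq> {1..n}" using assms(1) unfolding minimal_sqf_gens_def by auto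
  define P where "P u = {V. V \<subseteq> {mmax u<..n} \<and> card V = j}" for u
  define T where "T = {A. A \<subseteq> {1..n} \<and> card A = d + j \<and> in_ideal G A}"
  have segP: "\<forall>x\<in>u. \<forall>y\<in>V. x < y" if "u \<in> G" "V \<in> P u" for u V
  proof (intro ballI)
    fix x y assume x: "x \<in> u" and y: "y \<in> V"
    have "finite u" using Gs that finite_subset by blast
    then have "x \<le> mmax u" using mmax_ge x by blast
    moreover have "mmax u < y" using that y unfolding P_def by auto
    ultimately show "x < y" by simp
  qed
  have TU: "T = (\<Union>u\<in>G. (\<lambda>V. u \<union> V) ` P u)"
  proof
    show "T \<subseteq> (\<Union>u\<in>G. (\<lambda>V. u \<union> V) ` P u)"
    proof
      fix w assume "w \<in> T"
      then have w: "w \<subseteq> {1..n}" "card w = d + j" "in_ideal G w" unfolding T_def by auto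
      then obtain g where g: "g \<in> G" "g \<subseteq> w" unfolding in_ideal_def by blast
      have fw: "finite w" using w finite_subset by blast
      obtain u where u: "u \<subseteq> w" "card u = d" "\<forall>x\<in>u. \<forall>y\<in>w-u. x<y"
        using init_seg[OF fw, of d] w by auto
      have uG: "u \<in> G" using shift_lemma[OF assms w(1) u g] .
      have fu: "finite u" using fw u finite_subset by blast
      have "w - u \<in> P u" unfolding P_def
      proof (intro CollectI conjI)
        show "w - u \<subseteq> {mmax u<..n}"
        proof
          fix y assume y: "y \<in> w - u"
          have "y \<le> n" "1 \<le> y" using y w by auto
          moreover have "mmax u < y" unfolding mmax_def using fu y u(3) \<open>1 \<le> y\<close> by (subst Max_less_iff) auto
          ultimately show "y \<in> {mmax u<..n}" by simp
        qed
        show "card (w - u) = j" using card_Diff_subset[OF fu u(1)] u w by simp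
      qed
      moreover have "w = u \<union> (w - u)" using u by blast
      ultimately show "w \<in> (\<Union>u\<in>G. (\<lambda>V. u \<union> V) ` P u)" using uG by blast
    qed
  next
    show "(\<Union>u\<in>G. (\<lambda>V. u \<union> V) ` P u) \<subseteq> T"
    proof
      fix w assume "w \<in> (\<Union>u\<in>G. (\<lambda>V. u \<union> V) ` P u)"
      then obtain u V where uV: "u \<in> G" "V \<in> P u" "w = u \<union> V" by blast
      have fu: "finite u" using Gs uV finite_subset by blast
      have V: "V \<subseteq> {mmax u<..n}" "card V = j" using uV unfolding P_def by auto
      have fV: "finite V" using V finite_subset by blast
      have "u \<inter> V = {}" using segP[OF uV(1,2)] by auto
      then have "card w = d + j" using uV V assms(2) card_Un_disjoint[OF fu fV] by simp
      moreover have "w \<subseteq> {1..n}" using uV V Gs by auto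
      moreover have "in_ideal G w" unfolding in_ideal_def using uV by blast
      ultimately show "w \<in> T" unfolding T_def by blast
    qed
  qed
  have cardP: "card ((\<lambda>V. u \<union> V) ` P u) = (n - mmax u) choose j" if "u \<in> G" for u
  proof -
    have "inj_on (\<lambda>V. u \<union> V) (P u)"
    proof (rule inj_onI)
      fix V V' assume a: "V \<in> P u" "V' \<in> P u" "u \<union> V = u \<union> V'"
      have "u \<inter> V = {}" "u \<inter> V' = {}" using segP[OF that a(1)] segP[OF that a(2)] by auto
      then show "V = V'" using a(3) by blast
    qed
    then have "card ((\<lambda>V. u \<union> V) ` P u) = card (P u)" by (rule card_image)
    also have "\<dots> = card {mmax u<..n} choose j" unfolding P_def by (rule n_subsets) simp
    finally show ?thesis by simp
  qed
  have fP: "finite (P u)" for u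
    unfolding P_def by (rule finite_subset[of _ "Pow {mmax u<..n}"]) auto
  have "mu n G (d + j) = card T" unfolding mu_def T_def by simp
  also have "\<dots> = (\<Sum>u\<in>G. card ((\<lambda>V. u \<union> V) ` P u))" unfolding TU
  proof (rule card_UN_disjoint[OF fG])
    show "\<forall>u\<in>G. finite ((\<lambda>V. u \<union> V) ` P u)" using fP by blast
    show "\<forall>u\<in>G. \<forall>u'\<in>G. u \<noteq> u' \<longrightarrow> (\<lambda>V. u \<union> V) ` P u \<inter> (\<lambda>V. u' \<union> V) ` P u' = {}"
    proof (intro ballI impI)
      fix u u' assume uu: "u \<in> G" "u' \<in> G" "u \<noteq> u'"
      show "(\<lambda>V. u \<union> V) ` P u \<inter> (\<lambda>V. u' \<union> V) ` P u' = {}"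
      proof (rule ccontr)
        assume "(\<lambda>V. u \<union> V) ` P u \<inter> (\<lambda>V. u' \<union> V) ` P u' \<noteq> {}"
        then obtain V V' where VV: "V \<in> P u" "V' \<in> P u'" "u \<union> V = u' \<union> V'" by blast
        define w where "w = u \<union> V"
        have "finite u" using Gs uu(1) finite_subset by blast
        moreover have "finite V" using VV(1) unfolding P_def using finite_subset[of V "{mmax u<..n}"] by auto
        ultimately have fw: "finite w" unfolding w_def by simp
        have s1: "\<forall>x\<in>u. \<forall>y\<in>w-u. x<y" using segP[OF uu(1) VV(1)] unfolding w_def by blast
        have s2: "\<forall>x\<in>u'. \<forall>y\<in>w-u'. x<y" using segP[OF uu(2) VV(2)] VV(3) unfolding w_def by auto
        have "u = u'" by (rule seg_unique[OF fw _ _ _ s1 s2]) (use VV uu assms(2) in \<open>auto simp: w_def\<close>)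
        then show False using uu by simp
      qed
    qed
  qed
  also have "\<dots> = (\<Sum>u\<in>G. (n - mmax u) choose j)" using cardP by simp
  finally have eq1: "mu n G (d + j) = (\<Sum>u\<in>G. (n - mmax u) choose j)" .
  show ?thesis
  proof (cases "G = {}")
    case True
    then show ?thesis unfolding mu_def m_count_def in_ideal_def by simp
  next
    case False
    then obtain g where g: "g \<in> G" by blast
    have dn: "d \<le> n" using Gs g assms(2) card_mono[of "{1..n}" g] by auto
    have img: "mmax ` G \<subseteq> {d..n}"
    proof
      fix k assume "k \<in> mmax ` G"
      then obtain u where "u \<in> G" "k = mmax u" by blast
      then show "k \<in> {d..n}" using Gs assms(2) mmax_le[of u n] mmax_geq_card[of u n] by auto
    qed
    have "(\<Sum>u\<in>G. (n - mmax u) choose j)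
        = (\<Sum>k\<in>{d..n}. \<Sum>u\<in>{x \<in> G. mmax x = k}. (n - mmax u) choose j)"
      by (rule sum.group[symmetric, OF fG _ img]) simp
    also have "\<dots> = (\<Sum>k\<in>{d..n}. ((n - k) choose j) * m_count G k)"
      unfolding m_count_def by (rule sum.cong) (auto simp: mult.commute)
    also have "\<dots> = (\<Sum>i = 0..n - d. ((n - d - i) choose j) * m_count G (d + i))"
    proof -
      have "{d..n} = {0+d..(n-d)+d}" using dn by simp
      then have "(\<Sum>k\<in>{d..n}. ((n - k) choose j) * m_count G k)
          = (\<Sum>i\<in>{0..n-d}. ((n - (i + d)) choose j) * m_count G (i + d))"
        by (simp only: sum.shift_bounds_cl_nat_ivl)
      then show ?thesis by (simp add: add.commute)
    qed
    finally show ?thesis using eq1 by simp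
  qed
qed

end
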